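(* Let $T:I\to I$, $I=[0,1]$, be a non-singular map whose Perron–Frobenius operator $P$ satisfies: there exist $\alpha_0\in(0,1)$ and $B_0\ge 0$ such that $VPf\le \alpha_0 Vf+B_0\|f\|_1$ for all $f\in BV(I)$. Let $\eta$ be any finite partition of $I$ into intervals and $P_\eta=\Pi_\eta\circ P\circ\Pi_\eta$ its Ulam approximation. Then, with $\hat B=1+\frac{B_0}{1-\alpha_0}$ (independent of $\eta$), for all $n\in\mathbb N$ and all $f\in BV(I)$, $$\|P^nf\|_{BV}\le \alpha_0^n\|f\|_{BV}+\hat B\|f\|_1,\qquad \|P_\eta^nf\|_{BV}\le \alpha_0^n\|f\|_{BV}+\hat B\|f\|_1 .$$ If moreover $\alpha_0<1/3$, then for every open interval $H\subset I$, the Perron–Frobenius operator $P_H$ of the map with hole $T_H$ satisfies, for all $n\in\mathbb N$ and all $f\in BV(I)$, $$\|P_H^nf\|_{BV}\le \alpha^n\|f\|_{BV}+B\|f\|_1,$$ where $\alpha=3\alpha_0<1$ and $B=1+\frac{2\alpha_0+B_0}{1-\alpha}$, constants independent of $H$.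
   Context: $\lambda$ is Lebesgue measure on $I=[0,1]$, $L^1=L^1(I,\lambda)$. For $f\in L^1$, $Vf=\inf\{\mathrm{var}\,\bar f:\ \bar f=f \text{ a.e.}\}$, where $\mathrm{var}\,\bar f$ is the usual total variation of $\bar f$ on $[0,1]$; $BV(I)$ is the space of $f$ with $Vf<\infty$, normed by $\|f\|_{BV}=Vf+\|f\|_1$. $T$ non-singular means $\lambda(T^{-1}A)=0$ whenever $\lambda(A)=0$; its Perron–Frobenius operator $P:L^1\to L^1$ is defined by $\int_A Pf\,d\lambda=\int_{T^{-1}A}f\,d\lambda$ for all Borel $A$. For a finite partition $\eta$ of $I$ into intervals, $\Pi_\eta f(x)=\frac{1}{\lambda(J)}\int_J f\,d\lambda$ for $x\in J\in\eta$ (conditional expectation onto the $\sigma$-algebra generated by $\eta$). For an open interval $H\subset I$, let $X_0=I\setminus H$, $X_{n-1}=\bigcap_{i=0}^{n-1}T^{-i}X_0$, and $T_H=T|_{X_0}$; its Perron–Frobenius operator is $P_Hf=P(f\chi_{X_0})$, so that $P_H^nf=P^n(f\chi_{X_{n-1}})$. *)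

theory Defs
  imports "HOL-Analysis.Analysis"
begin

definition lam :: "real measure" where
  "lam = restrict_space lborel {0..1}"

definition var01 :: "(real \<Rightarrow> real) \<Rightarrow> ereal" where
  "var01 g = (SUP xs \<in> {xs. sorted xs \<and> set xs \<subseteq> {0..1}}.
      ereal (\<Sum>i < length xs - 1. \<bar>g (xs ! Suc i) - g (xs ! i)\<bar>))"

definition Var :: "(real \<Rightarrow> real) \<Rightarrow> ereal" where
  "Var f = (INF g \<in> {g. AE x in lam. g x = f x}. var01 g)"

definition norm1 :: "(real \<Rightarrow> real) \<Rightarrow> real" where
  "norm1 f = (\<integral>x. \<bar>f x\<bar> \<partial>lam)"

definition BV :: "(real \<Rightarrow> real) set" where
  "BV = {f. integrable lam f \<and> Var f < \<infinity>}"

definition normBV :: "(real \<Rightarrow> real) \<Rightarrow> ereal" where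
  "normBV f = Var f + ereal (norm1 f)"

definition nonsingular :: "(real \<Rightarrow> real) \<Rightarrow> bool" where
  "nonsingular T \<longleftrightarrow> (\<forall>A \<in> sets lam. emeasure lam A = 0 \<longrightarrow>
      emeasure lam (T -` A \<inter> space lam) = 0)"

definition is_PF_operator :: "(real \<Rightarrow> real) \<Rightarrow> ((real \<Rightarrow> real) \<Rightarrow> (real \<Rightarrow> real)) \<Rightarrow> bool" where
  "is_PF_operator T P \<longleftrightarrow> (\<forall>f. integrable lam f \<longrightarrow> integrable lam (P f) \<and>
      (\<forall>A \<in> sets lam. (LINT x:A|lam. P f x) = (LINT x:(T -` A \<inter> space lam)|lam. f x)))"

definition interval_partition :: "real set set \<Rightarrow> bool" where
  "interval_partition \<eta> \<longleftrightarrow> finite \<eta> \<and> \<Union>\<eta> = {0..1} \<and>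
      (\<forall>J\<in>\<eta>. J \<noteq> {} \<and> is_interval J) \<and>
      (\<forall>J\<in>\<eta>. \<forall>K\<in>\<eta>. J \<noteq> K \<longrightarrow> J \<inter> K = {})"

definition Pi_part :: "real set set \<Rightarrow> (real \<Rightarrow> real) \<Rightarrow> (real \<Rightarrow> real)" where
  "Pi_part \<eta> f x = (\<Sum>J\<in>\<eta>. if x \<in> J then (LINT y:J|lam. f y) / measure lam J else 0)"

definition ulam_op :: "real set set \<Rightarrow> ((real \<Rightarrow> real) \<Rightarrow> (real \<Rightarrow> real)) \<Rightarrow> (real \<Rightarrow> real) \<Rightarrow> (real \<Rightarrow> real)" where
  "ulam_op \<eta> P = Pi_part \<eta> \<circ> P \<circ> Pi_part \<eta>"

text \<open>Perron--Frobenius operator of the map with hole H: P_H f = P (f * chi_{X_0}), X_0 = I - H.\<close>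
definition hole_op :: "real set \<Rightarrow> ((real \<Rightarrow> real) \<Rightarrow> (real \<Rightarrow> real)) \<Rightarrow> (real \<Rightarrow> real) \<Rightarrow> (real \<Rightarrow> real)" where
  "hole_op H P f = P (\<lambda>x. f x * indicator ({0..1} - H) x)"

end

theory Submission
  imports Defs
begin

lemma space_lam[simp]: "space lam = {0..1}"
  by (simp add: lam_def space_restrict_space)

lemma sets_lam_iff: "A \<in> sets lam \<longleftrightarrow> A \<subseteq> {0..1} \<and> A \<in> sets borel"
  unfolding lam_def by (subst sets_restrict_space_iff) auto

lemma emeasure_lam: "A \<subseteq> {0..1} \<Longrightarrow> emeasure lam A = emeasure lborel A"
  unfolding lam_def by (rule emeasure_restrict_space) auto

lemma emeasure_lam_space: "emeasure lam (space lam) = 1"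
  by (simp add: emeasure_lam)

interpretation lamF: finite_measure lam
  by (rule finite_measureI) (simp only: emeasure_lam_space, simp)

lemma measure_lam_space: "measure lam {0..1} = 1"
  using emeasure_lam_space by (simp add: measure_def)

lemma var01_nonneg: "0 \<le> var01 g"
  unfolding var01_def
  by (rule SUP_upper2[where i="[]"]) auto

lemma Var_nonneg: "0 \<le> Var f"
  unfolding Var_def by (rule INF_greatest) (rule var01_nonneg)


definition vs :: "(real \<Rightarrow> real) \<Rightarrow> real list \<Rightarrow> real" where
  "vs g xs = (\<Sum>i < length xs - 1. \<bar>g (xs ! Suc i) - g (xs ! i)\<bar>)"

lemma vs_Nil[simp]: "vs g [] = 0" by (simp add: vs_def)
lemma vs_single[simp]: "vs g [x] = 0" by (simp add: vs_def)
lemma vs_Cons2[simp]: "vs g (x # y # r) = \<bar>g y - g x\<bar> + vs g (y # r)"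
  unfolding vs_def by (simp add: sum.lessThan_Suc_shift del: sum.lessThan_Suc)

lemma vs_nonneg: "0 \<le> vs g xs"
  unfolding vs_def by (rule sum_nonneg) auto

lemma vs_cong: "(\<And>x. x \<in> set xs \<Longrightarrow> g x = h x) \<Longrightarrow> vs g xs = vs h xs"
  unfolding vs_def by (intro sum.cong refl) (simp add: nth_mem)

lemma vs_append: "xs \<noteq> [] \<Longrightarrow> ys \<noteq> [] \<Longrightarrow>
   vs g (xs @ ys) = vs g xs + \<bar>g (hd ys) - g (last xs)\<bar> + vs g ys"
proof (induction xs rule: induct_list012)
  case (3 x y r)
  then show ?case by simp
qed (auto simp: neq_Nil_conv)

lemma vs_le_var01: "sorted xs \<Longrightarrow> set xs \<subseteq> {0..1} \<Longrightarrow> ereal (vs g xs) \<le> var01 g"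
  unfolding var01_def vs_def by (rule SUP_upper) auto

lemma var01_le: "(\<And>xs. sorted xs \<Longrightarrow> set xs \<subseteq> {0..1} \<Longrightarrow> vs g xs \<le> c) \<Longrightarrow> var01 g \<le> ereal c"
  unfolding var01_def vs_def by (rule SUP_least) auto

lemma diff_le_var01:
  assumes "x \<in> {0..1}" "y \<in> {0..1}"
  shows "ereal \<bar>g x - g y\<bar> \<le> var01 g"
proof -
  have "ereal (vs g [min x y, max x y]) \<le> var01 g"
    by (rule vs_le_var01) (use assms in auto)
  then show ?thesis by (cases "x \<le> y") (auto simp: max_def min_def abs_minus_commute)
qed


lemma Var_cong:
  assumes "AE x in lam. f x = f' x"
  shows "Var f = Var f'"
proof -
  have "{g. AE x in lam. g x = f x} = {g. AE x in lam. g x = f' x}"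
    using assms by (auto elim: AE_mp)
  then show ?thesis unfolding Var_def by simp
qed

lemma integrable_ind_mult[intro]:
  fixes f :: "'a \<Rightarrow> real"
  shows "A \<in> sets M \<Longrightarrow> integrable M f \<Longrightarrow> integrable M (\<lambda>x. indicator A x * f x)"
  using integrable_real_mult_indicator[of A M f] by (simp add: mult.commute)

lemma norm1_nonneg: "0 \<le> norm1 f"
  unfolding norm1_def by (rule integral_nonneg_AE) auto

lemma sup_bound:
  assumes ae: "AE y in lam. g y = f y" and int: "integrable lam f"
    and fin: "var01 g \<le> ereal r" and x: "x \<in> {0..1}"
  shows "\<bar>g x\<bar> \<le> r + norm1 f"
proof -
  have "AE y in lam. \<bar>g x\<bar> \<le> r + \<bar>f y\<bar>"
    using ae
  proof (rule AE_mp, intro AE_I2 impI)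
    fix y assume y: "y \<in> space lam" and e: "g y = f y"
    have "ereal \<bar>g x - g y\<bar> \<le> ereal r"
      using order_trans[OF diff_le_var01[of x y g] fin] x y by auto
    then have "\<bar>g x - g y\<bar> \<le> r" by simp
    then show "\<bar>g x\<bar> \<le> r + \<bar>f y\<bar>" using e by linarith
  qed
  then have "integral\<^sup>L lam (\<lambda>y. \<bar>g x\<bar>) \<le> integral\<^sup>L lam (\<lambda>y. r + \<bar>f y\<bar>)"
    by (intro integral_mono_AE) (use int in auto)
  also have "\<dots> = r + norm1 f"
    using int by (simp add: norm1_def measure_lam_space)
  finally show ?thesis by (simp add: measure_lam_space)
qed

lemma PF_norm:
  assumes meas: "T \<in> lam \<rightarrow>\<^sub>M lam" and PF: "is_PF_operator T P" and int: "integrable lam f"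
  shows "integrable lam (P f)" "norm1 (P f) \<le> norm1 f"
proof -
  show ip: "integrable lam (P f)" using PF int unfolding is_PF_operator_def by auto
  have PFA: "\<And>A. A \<in> sets lam \<Longrightarrow> (LINT x:A|lam. P f x) = (LINT x:(T -` A \<inter> space lam)|lam. f x)"
    using PF int unfolding is_PF_operator_def by auto
  define A where "A = {x \<in> space lam. 0 \<le> P f x}"
  define B where "B = space lam - A"
  have mP: "P f \<in> borel_measurable lam" using ip by auto
  have A: "A \<in> sets lam" unfolding A_def using mP by measurable
  have B: "B \<in> sets lam" unfolding B_def using sets.compl_sets[OF A] by simp
  define A' where "A' = T -` A \<inter> space lam"
  define B' where "B' = T -` B \<inter> space lam"
  have abs_eq: "\<And>x. x \<in> space lam \<Longrightarrow> \<bar>P f x\<bar> = indicator A x * P f x - indicator B x * P f x"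
    by (auto simp: A_def B_def indicator_def)
  have "norm1 (P f) = integral\<^sup>L lam (\<lambda>x. indicator A x * P f x - indicator B x * P f x)"
    unfolding norm1_def by (rule Bochner_Integration.integral_cong) (auto simp: abs_eq simp del: space_lam)
  also have "\<dots> = (LINT x:A|lam. P f x) - (LINT x:B|lam. P f x)"
    unfolding set_lebesgue_integral_def real_scaleR_def using A B ip
    by (intro Bochner_Integration.integral_diff) (auto intro!: integrable_ind_mult)
  also have "\<dots> = (LINT x:A'|lam. f x) - (LINT x:B'|lam. f x)"
    using PFA[OF A] PFA[OF B] by (simp add: A'_def B'_def)
  also have "\<dots> = integral\<^sup>L lam (\<lambda>x. indicator A' x * f x - indicator B' x * f x)"
  proof -
    have "A' \<in> sets lam" "B' \<in> sets lam"
      unfolding A'_def B'_def using measurable_sets[OF meas A] measurable_sets[OF meas B] by auto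
    then show ?thesis unfolding set_lebesgue_integral_def real_scaleR_def using int
      by (intro Bochner_Integration.integral_diff[symmetric]) (auto intro!: integrable_ind_mult)
  qed
  also have "\<dots> \<le> norm1 f"
    unfolding norm1_def
  proof (rule integral_mono_AE)
    have "A' \<in> sets lam" "B' \<in> sets lam"
      unfolding A'_def B'_def using measurable_sets[OF meas A] measurable_sets[OF meas B] by auto
    then show "integrable lam (\<lambda>x. indicator A' x * f x - indicator B' x * f x)"
      using int by (auto intro!: integrable_ind_mult)
  qed (use int in \<open>auto simp: indicator_def\<close>)
  finally show "norm1 (P f) \<le> norm1 f" .
qed


lemma sorted_hd_le: "sorted w \<Longrightarrow> z \<in> set w \<Longrightarrow> hd w \<le> z"
  by (cases w) auto

lemma dropWhile_gt: "sorted xs \<Longrightarrow> x \<in> set (dropWhile (\<lambda>x. x \<le> a) xs) \<Longrightarrow> a < x"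
proof (induction xs)
  case (Cons y ys)
  then show ?case by (auto split: if_splits)
qed simp

lemma dropWhile_ge: "x \<in> set (dropWhile (\<lambda>x. x < b) xs) \<Longrightarrow> sorted xs \<Longrightarrow> b \<le> x"
proof (induction xs)
  case (Cons y ys)
  then show ?case by (auto split: if_splits)
qed simp

lemma vs_hole:
  fixes g :: "real \<Rightarrow> real" and a b K r :: real
  defines "h \<equiv> \<lambda>x. g x * indicator ({0..1} - {a<..<b}) x"
  assumes xs: "sorted xs" "set xs \<subseteq> {0..1}"
    and K: "\<And>x. x \<in> {0..1} \<Longrightarrow> \<bar>g x\<bar> \<le> K"
    and r: "\<And>ys. sorted ys \<Longrightarrow> set ys \<subseteq> {0..1} \<Longrightarrow> vs g ys \<le> r"
  shows "vs h xs \<le> r + 2 * K"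
proof -
  define L where "L = takeWhile (\<lambda>x. x \<le> a) xs"
  define Rs where "Rs = dropWhile (\<lambda>x. x \<le> a) xs"
  define M where "M = takeWhile (\<lambda>x. x < b) Rs"
  define R where "R = dropWhile (\<lambda>x. x < b) Rs"
  have xsplit: "xs = L @ M @ R" unfolding L_def M_def R_def Rs_def by simp
  have sRs: "sorted Rs" unfolding Rs_def using xs by (simp add: sorted_dropWhile)
  have Lle: "\<And>x. x \<in> set L \<Longrightarrow> x \<le> a" unfolding L_def by (auto dest: set_takeWhileD)
  have Min: "\<And>x. x \<in> set M \<Longrightarrow> a < x \<and> x < b"
    unfolding M_def using dropWhile_gt[OF xs(1)] by (auto dest: set_takeWhileD simp: Rs_def)
  have Rge: "\<And>x. x \<in> set R \<Longrightarrow> b \<le> x" unfolding R_def using dropWhile_ge sRs by blast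
  have sets: "set L \<subseteq> {0..1}" "set M \<subseteq> {0..1}" "set R \<subseteq> {0..1}"
    using xs(2) xsplit by (metis Un_subset_iff set_append)+
  have hL: "\<And>x. x \<in> set L \<Longrightarrow> h x = g x" using Lle sets(1) by (force simp: h_def indicator_def)
  have hR: "\<And>x. x \<in> set R \<Longrightarrow> h x = g x" using Rge sets(3) by (force simp: h_def indicator_def)
  have hM: "\<And>x. x \<in> set M \<Longrightarrow> h x = 0" using Min by (auto simp: h_def)
  have sLR: "sorted (L @ R)" using xs(1) xsplit by (simp add: sorted_append)
  have LRr: "vs g (L @ R) \<le> r" using sLR sets by (intro r) auto
  have LR: "vs g L + vs g R \<le> r"
  proof (cases "L = [] \<or> R = []")
    case True then show ?thesis using LRr by auto
  next
    case False then show ?thesis using LRr vs_append[of L R g] by auto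
  qed
  have KL: "L \<noteq> [] \<Longrightarrow> \<bar>g (last L)\<bar> \<le> K" using sets(1) K last_in_set by blast
  have KR: "R \<noteq> [] \<Longrightarrow> \<bar>g (hd R)\<bar> \<le> K" using sets(3) K hd_in_set by blast
  have K0: "0 \<le> K" using K[of 0] by auto
  have vM: "vs h M = 0" using vs_cong[of M h "\<lambda>_. 0"] hM by (simp add: vs_def)
  show ?thesis
  proof (cases "M = []")
    case True
    then have "vs h xs = vs g xs" using xsplit hL hR by (intro vs_cong) auto
    then show ?thesis using r[OF xs] K0 by simp
  next
    case Mne: False
    have e1: "vs h (M @ R) \<le> K + vs g R"
    proof (cases "R = []")
      case True then show ?thesis using vM K0 by simp
    next
      case False
      have "vs h (M @ R) = vs h M + \<bar>h (hd R) - h (last M)\<bar> + vs h R"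
        using vs_append Mne False by blast
      also have "\<dots> = \<bar>g (hd R)\<bar> + vs g R" using vM hM[of "last M"] hR[of "hd R"] Mne False
        vs_cong[of R h g] hR by simp
      finally show ?thesis using KR False by simp
    qed
    have e2: "vs h (L @ M @ R) \<le> vs g L + K + vs h (M @ R)"
    proof (cases "L = []")
      case True then show ?thesis using K0 by simp
    next
      case False
      have "vs h (L @ (M @ R)) = vs h L + \<bar>h (hd (M @ R)) - h (last L)\<bar> + vs h (M @ R)"
        using vs_append Mne False by blast
      also have "\<dots> = vs g L + \<bar>g (last L)\<bar> + vs h (M @ R)"
        using hM[of "hd M"] hL[of "last L"] Mne False vs_cong[of L h g] hL by simp
      finally show ?thesis using KL False by simp
    qed
    show ?thesis using e1 e2 LR xsplit by simp
  qed
qed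


lemma BV_Var_finite: "f \<in> BV \<Longrightarrow> Var f = ereal (real_of_ereal (Var f))"
  using Var_nonneg[of f] unfolding BV_def by (cases "Var f") auto

lemma ereal_le_eps:
  assumes "\<And>e. 0 < e \<Longrightarrow> x \<le> ereal (c + e)" "0 \<le> x"
  shows "x \<le> ereal c"
proof -
  have "x \<le> ereal (c + 1)" using assms(1)[of 1] by simp
  then obtain y where y: "x = ereal y" using assms(2) by (cases x) auto
  have "y \<le> c" by (rule field_le_epsilon) (use assms(1) y in auto)
  then show ?thesis using y by simp
qed

lemma hole_BV:
  fixes a b :: real
  assumes f: "f \<in> BV"
  defines "h \<equiv> \<lambda>x. f x * indicator ({0..1} - {a<..<b}) x"
  shows "integrable lam h" "norm1 h \<le> norm1 f"
    "Var h \<le> ereal (3 * real_of_ereal (Var f) + 2 * norm1 f)"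
proof -
  have int: "integrable lam f" using f by (simp add: BV_def)
  have S: "{0..1} - {a<..<b} \<in> sets lam" by (simp add: sets_lam_iff) 
  show ih: "integrable lam h" unfolding h_def using integrable_real_mult_indicator[OF S int] .
  show "norm1 h \<le> norm1 f" unfolding norm1_def h_def
    by (rule integral_mono) (use int ih in \<open>auto simp: h_def indicator_def\<close>)
  define v where "v = real_of_ereal (Var f)"
  have Vf: "Var f = ereal v" using BV_Var_finite[OF f] by (simp add: v_def)
  show "Var h \<le> ereal (3 * v + 2 * norm1 f)"
  proof (rule ereal_le_eps[OF _ Var_nonneg])
    fix e :: real assume e: "0 < e"
    have "Var f < ereal (v + e/3)" using Vf e by simp
    then obtain g where g: "AE x in lam. g x = f x" and gv: "var01 g < ereal (v + e/3)"
      unfolding Var_def by (auto simp: INF_less_iff)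
    define r where "r = v + e/3"
    have gr: "var01 g \<le> ereal r" using gv r_def by simp
    have K: "\<And>x. x \<in> {0..1} \<Longrightarrow> \<bar>g x\<bar> \<le> r + norm1 f"
      using sup_bound[OF g int gr] by blast
    have rr: "\<And>ys. sorted ys \<Longrightarrow> set ys \<subseteq> {0..1} \<Longrightarrow> vs g ys \<le> r"
      by (metis vs_le_var01 gr order_trans ereal_less_eq(3))
    define gh where "gh = (\<lambda>x. g x * indicator ({0..1} - {a<..<b}) x)"
    have "var01 gh \<le> ereal (r + 2 * (r + norm1 f))"
      unfolding gh_def by (rule var01_le, rule vs_hole[OF _ _ K rr]) auto
    moreover have "Var h \<le> var01 gh"
      unfolding Var_def
      by (rule INF_lower) (use g in \<open>auto simp: gh_def h_def elim!: AE_mp\<close>)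
    ultimately have "Var h \<le> ereal (r + 2 * (r + norm1 f))" by (rule order_trans[rotated])
    then show "Var h \<le> ereal (3 * v + 2 * norm1 f + e)"
      by (rule order_trans) (simp add: r_def algebra_simps)
  qed
qed


lemma interval_order:
  fixes J K :: "real set"
  assumes "is_interval J" "is_interval K" "J \<inter> K = {}" "x \<in> J" "y \<in> K" "x < y" "u \<in> J" "v \<in> K"
  shows "u < v"
proof (rule ccontr)
  assume "\<not> u < v"
  then have vu: "v \<le> u" by simp
  show False
  proof (cases "v \<le> x")
    case True
    then have "x \<in> K" using assms(2,5,6,8) unfolding is_interval_1 by (meson less_imp_le)
    then show False using assms(3,4) by auto
  next
    case False
    then have "v \<in> J" using assms(1,4,7) vu unfolding is_interval_1 by (meson not_le less_imp_le)
    then show False using assms(3,8) by auto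
  qed
qed

lemma step_var:
  fixes \<eta> :: "real set set" and cell :: "real \<Rightarrow> real set" and lo hi :: "real set \<Rightarrow> real"
    and val :: "real set \<Rightarrow> real" and g :: "real \<Rightarrow> real"
  assumes disj: "\<And>J K. J \<in> \<eta> \<Longrightarrow> K \<in> \<eta> \<Longrightarrow> J \<noteq> K \<Longrightarrow> J \<inter> K = {}"
    and ivl: "\<And>J. J \<in> \<eta> \<Longrightarrow> is_interval J"
    and cell: "\<And>x. x \<in> \<Union>\<eta> \<Longrightarrow> cell x \<in> \<eta> \<and> x \<in> cell x"
    and lohi: "\<And>J. J \<in> \<eta> \<Longrightarrow> lo J \<in> J \<and> hi J \<in> J \<and> lo J \<le> hi J \<and>
        \<bar>g (lo J) - val J\<bar> + \<bar>val J - g (hi J)\<bar> = \<bar>g (hi J) - g (lo J)\<bar>"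
  shows "sorted xs \<Longrightarrow> set xs \<subseteq> \<Union>\<eta> \<Longrightarrow> xs \<noteq> [] \<Longrightarrow>
    \<exists>w. sorted w \<and> set w \<subseteq> \<Union>\<eta> \<and> w \<noteq> [] \<and> hd w = lo (cell (hd xs)) \<and>
      \<bar>g (lo (cell (hd xs))) - val (cell (hd xs))\<bar> + vs (\<lambda>x. val (cell x)) xs \<le> vs g w"
proof (induction xs rule: induct_list012)
  case 1 then show ?case by simp
next
  case (2 x)
  then have c: "cell x \<in> \<eta>" using cell by auto
  show ?case
    by (rule exI[of _ "[lo (cell x), hi (cell x)]"]) (use lohi[OF c] c in auto)
next
  case (3 x y r)
  have sy: "sorted (y # r)" "set (y # r) \<subseteq> \<Union>\<eta>" using 3 by auto
  obtain w' where w': "sorted w'" "set w' \<subseteq> \<Union>\<eta>" "w' \<noteq> []" "hd w' = lo (cell y)"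
    "\<bar>g (lo (cell y)) - val (cell y)\<bar> + vs (\<lambda>x. val (cell x)) (y # r) \<le> vs g w'"
    using 3(2)[OF sy] by auto
  have cx: "cell x \<in> \<eta>" "x \<in> cell x" and cy: "cell y \<in> \<eta>" "y \<in> cell y" using cell "3.prems"(2) by auto
  have xy: "x \<le> y" using "3.prems"(1) by simp
  show ?case
  proof (cases "cell x = cell y")
    case True
    then show ?thesis using w' by (intro exI[of _ w']) auto
  next
    case False
    have "x \<noteq> y" using False by auto
    then have xy': "x < y" using xy by simp
    have lt: "hi (cell x) < lo (cell y)"
      by (rule interval_order[OF ivl[OF cx(1)] ivl[OF cy(1)] disj[OF cx(1) cy(1) False] cx(2) cy(2) xy'])
         (use lohi[OF cx(1)] lohi[OF cy(1)] in auto)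
    define w where "w = lo (cell x) # hi (cell x) # w'"
    have hw: "\<And>z. z \<in> set w' \<Longrightarrow> lo (cell y) \<le> z" using sorted_hd_le[OF w'(1)] w'(4) by auto
    have sw: "sorted w" unfolding w_def using w'(1) lt lohi[OF cx(1)] hw
      by (auto intro: order_trans)
       (meson dual_order.strict_implies_order order_trans)+
    have setw: "set w \<subseteq> \<Union>\<eta>" unfolding w_def using w' lohi[OF cx(1)] cx by auto
    have tri: "\<bar>val (cell y) - val (cell x)\<bar> \<le> \<bar>val (cell y) - g (lo (cell y))\<bar>
       + \<bar>g (lo (cell y)) - g (hi (cell x))\<bar> + \<bar>g (hi (cell x)) - val (cell x)\<bar>" by linarith
    have vw: "vs g w = \<bar>g (hi (cell x)) - g (lo (cell x))\<bar> + \<bar>g (lo (cell y)) - g (hi (cell x))\<bar> + vs g w'"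
      unfolding w_def using w'(3,4) by (cases w') auto
    show ?thesis
      by (rule exI[of _ w]) (use sw setw vw tri w'(5) lohi[OF cx(1)] in \<open>auto simp: w_def abs_minus_commute\<close>)
  qed
qed


context
  fixes \<eta> :: "real set set"
  assumes ip: "interval_partition \<eta>"
begin

lemma ip_finite: "finite \<eta>" and ip_union: "\<Union>\<eta> = {0..1}"
  and ip_ivl: "J \<in> \<eta> \<Longrightarrow> is_interval J" and ip_ne: "J \<in> \<eta> \<Longrightarrow> J \<noteq> {}"
  and ip_disj: "J \<in> \<eta> \<Longrightarrow> K \<in> \<eta> \<Longrightarrow> J \<noteq> K \<Longrightarrow> J \<inter> K = {}"
  using ip unfolding interval_partition_def by auto

lemma ip_sets: "J \<in> \<eta> \<Longrightarrow> J \<in> sets lam"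
  using ip_union ip_ivl real_interval_borel_measurable by (auto simp: sets_lam_iff)

lemma ip_sub: "J \<in> \<eta> \<Longrightarrow> J \<subseteq> {0..1}"
  using ip_union by auto

definition cell :: "real \<Rightarrow> real set" where
  "cell x = (THE J. J \<in> \<eta> \<and> x \<in> J)"

lemma cell: assumes "x \<in> {0..1}" shows "cell x \<in> \<eta> \<and> x \<in> cell x"
proof -
  obtain J where J: "J \<in> \<eta>" "x \<in> J" using assms ip_union by (metis Union_iff)
  have "cell x = J" unfolding cell_def
    by (rule the_equality) (use J ip_disj in auto)
  then show ?thesis using J by simp
qed

lemma cell_eq: "J \<in> \<eta> \<Longrightarrow> x \<in> J \<Longrightarrow> cell x = J"
  using cell[of x] ip_sub ip_disj by blast

lemma Pi_part_eq: assumes "J \<in> \<eta>" "x \<in> J"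
  shows "Pi_part \<eta> f x = (LINT y:J|lam. f y) / measure lam J"
proof -
  have "Pi_part \<eta> f x = (\<Sum>K\<in>\<eta>. if K = J then (LINT y:K|lam. f y) / measure lam K else 0)"
    unfolding Pi_part_def using assms ip_disj by (intro sum.cong refl) auto
  also have "\<dots> = (LINT y:J|lam. f y) / measure lam J" using assms ip_finite by simp
  finally show ?thesis .
qed

end

context
  fixes \<eta> :: "real set set"
  assumes ip: "interval_partition \<eta>"
begin

lemma avg_side:
  assumes J: "J \<in> \<eta>" "measure lam J > 0" and int: "integrable lam f"
    and g: "AE y in lam. g y = f y"
  shows "\<exists>u\<in>J. g u \<le> (LINT y:J|lam. f y) / measure lam J"
proof (rule ccontr)
  define c where "c = (LINT y:J|lam. f y) / measure lam J"
  assume "\<not> (\<exists>u\<in>J. g u \<le> (LINT y:J|lam. f y) / measure lam J)"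
  then have gt: "\<And>u. u \<in> J \<Longrightarrow> c < g u" by (auto simp: c_def not_le)
  have JS: "J \<in> sets lam" using ip_sets[OF ip J(1)] .
  have "integral\<^sup>L lam (\<lambda>y. indicator J y * c) < integral\<^sup>L lam (\<lambda>y. indicator J y * f y)"
  proof (rule lamF.integral_less_AE[where A=J])
    show "integrable lam (\<lambda>y. indicator J y * c)" using JS by (intro integrable_ind_mult) auto
    show "integrable lam (\<lambda>y. indicator J y * f y)" using JS int by auto
    show "emeasure lam J \<noteq> 0" using J(2) by (metis less_irrefl measure_zero_top zero_ennreal.rep_eq measure_def enn2real_0)
    show "J \<in> sets lam" by (rule JS)
    show "AE x in lam. x \<in> J \<longrightarrow> indicator J x * c \<noteq> indicator J x * f x"
      using g by (rule AE_mp) (intro AE_I2 impI, use gt in force)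
    show "AE x in lam. indicator J x * c \<le> indicator J x * f x"
      using g by (rule AE_mp) (intro AE_I2 impI, use gt in \<open>force simp: indicator_def intro: less_imp_le\<close>)
  qed
  moreover have "integral\<^sup>L lam (\<lambda>y. indicator J y * c) = measure lam J * c"
    using ip_sub[OF ip J(1)] by (simp add: Int_absorb2)
  moreover have "integral\<^sup>L lam (\<lambda>y. indicator J y * f y) = (LINT y:J|lam. f y)"
    by (simp add: set_lebesgue_integral_def)
  ultimately show False using J(2) by (simp add: c_def)
qed

lemma avg_side2:
  assumes J: "J \<in> \<eta>" "measure lam J > 0" and int: "integrable lam f"
    and g: "AE y in lam. g y = f y"
  shows "\<exists>u\<in>J. (LINT y:J|lam. f y) / measure lam J \<le> g u"
proof -
  have i2: "integrable lam (\<lambda>y. - f y)" using int by simp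
  have g2: "AE y in lam. - g y = - f y"
    using g by (rule AE_mp) (rule AE_I2, simp)
  obtain u where u: "u \<in> J" "- g u \<le> (LINT y:J|lam. - f y) / measure lam J"
    using avg_side[OF J i2 g2] by blast
  have e: "(LINT y:J|lam. - f y) = - (LINT y:J|lam. f y)"
    unfolding set_lebesgue_integral_def by simp
  have "(LINT y:J|lam. f y) / measure lam J \<le> g u"
    using u(2) unfolding e by (simp add: minus_divide_left[symmetric])
  then show ?thesis using u(1) by blast
qed

end

context
  fixes \<eta> :: "real set set"
  assumes ip: "interval_partition \<eta>"
begin

lemma between_abs:
  fixes a b v :: real
  assumes "a \<le> v \<and> v \<le> b \<or> b \<le> v \<and> v \<le> a"
  shows "\<bar>a - v\<bar> + \<bar>v - b\<bar> = \<bar>b - a\<bar>"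
  using assms by auto

lemma lohi_exists:
  fixes f g :: "real \<Rightarrow> real"
  assumes int: "integrable lam f" and g: "AE y in lam. g y = f y"
  defines "val \<equiv> \<lambda>J. if measure lam J > 0 then (LINT y:J|lam. f y) / measure lam J
                      else g (SOME p. p \<in> J)"
  shows "\<exists>lo hi. \<forall>J\<in>\<eta>. lo J \<in> J \<and> hi J \<in> J \<and> lo J \<le> hi J \<and>
        \<bar>g (lo J) - val J\<bar> + \<bar>val J - g (hi J)\<bar> = \<bar>g (hi J) - g (lo J)\<bar>"
proof -
  have "\<forall>J\<in>\<eta>. \<exists>p. fst p \<in> J \<and> snd p \<in> J \<and> fst p \<le> snd p \<and>
        \<bar>g (fst p) - val J\<bar> + \<bar>val J - g (snd p)\<bar> = \<bar>g (snd p) - g (fst p)\<bar>"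
  proof
    fix J assume J: "J \<in> \<eta>"
    show "\<exists>p. fst p \<in> J \<and> snd p \<in> J \<and> fst p \<le> snd p \<and>
        \<bar>g (fst p) - val J\<bar> + \<bar>val J - g (snd p)\<bar> = \<bar>g (snd p) - g (fst p)\<bar>"
    proof (cases "measure lam J > 0")
      case True
      obtain u where u: "u \<in> J" "g u \<le> val J"
        using avg_side[OF ip J True int g] True by (auto simp: val_def)
      obtain v where v: "v \<in> J" "val J \<le> g v"
        using avg_side2[OF ip J True int g] True by (auto simp: val_def)
      show ?thesis
      proof (cases "u \<le> v")
        case True
        then show ?thesis using u v by (intro exI[of _ "(u, v)"]) (simp add: between_abs)
      next
        case False
        then show ?thesis using u v by (intro exI[of _ "(v, u)"]) (simp add: between_abs)
      qed
    next
      case False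
      define p where "p = (SOME p. p \<in> J)"
      have p: "p \<in> J" unfolding p_def using ip_ne[OF ip J] by (simp add: some_in_eq)
      have "val J = g p" using False by (simp add: val_def p_def)
      then show ?thesis using p by (intro exI[of _ "(p, p)"]) simp
    qed
  qed
  then obtain F where F: "\<forall>J\<in>\<eta>. fst (F J) \<in> J \<and> snd (F J) \<in> J \<and> fst (F J) \<le> snd (F J) \<and>
        \<bar>g (fst (F J)) - val J\<bar> + \<bar>val J - g (snd (F J))\<bar> = \<bar>g (snd (F J)) - g (fst (F J))\<bar>"
    by (metis bchoice)
  show ?thesis by (rule exI[of _ "\<lambda>J. fst (F J)"], rule exI[of _ "\<lambda>J. snd (F J)"]) (use F in simp)
qed

lemma Var_Pi:
  assumes int: "integrable lam f"
  shows "Var (Pi_part \<eta> f) \<le> Var f"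
  unfolding Var_def[of f]
proof (rule INF_greatest)
  fix g assume "g \<in> {g. AE x in lam. g x = f x}"
  then have g: "AE x in lam. g x = f x" by simp
  define val where "val \<equiv> \<lambda>J. if measure lam J > 0 then (LINT y:J|lam. f y) / measure lam J
                      else g (SOME p. p \<in> J)"
  obtain lo hi where lohi: "\<And>J. J\<in>\<eta> \<Longrightarrow> lo J \<in> J \<and> hi J \<in> J \<and> lo J \<le> hi J \<and>
        \<bar>g (lo J) - val J\<bar> + \<bar>val J - g (hi J)\<bar> = \<bar>g (hi J) - g (lo J)\<bar>"
    using lohi_exists[OF int g] unfolding val_def by blast
  define s where "s = (\<lambda>x. val (cell \<eta> x))"
  have ae: "AE x in lam. s x = Pi_part \<eta> f x"
  proof (rule AE_I')
    let ?I = "{J\<in>\<eta>. measure lam J = 0}"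
    show "(\<Union>J\<in>?I. J) \<in> null_sets lam"
    proof (rule null_sets_UN')
      show "countable ?I" using ip_finite[OF ip] by (simp add: countable_finite)
      fix J assume J: "J \<in> ?I"
      then have JS: "J \<in> sets lam" using ip_sets[OF ip] by auto
      then show "J \<in> null_sets lam" using J lamF.emeasure_eq_measure[of J] by (auto simp: null_sets_def)
    qed
    show "{x \<in> space lam. s x \<noteq> Pi_part \<eta> f x} \<subseteq> (\<Union>J\<in>?I. J)"
    proof safe
      fix x assume x: "x \<in> space lam" "s x \<noteq> Pi_part \<eta> f x"
      have c: "cell \<eta> x \<in> \<eta>" "x \<in> cell \<eta> x" using cell[OF ip, of x] x by auto
      have "measure lam (cell \<eta> x) = 0"
      proof (rule ccontr)
        assume "measure lam (cell \<eta> x) \<noteq> 0"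
        then have "measure lam (cell \<eta> x) > 0" using measure_nonneg[of lam "cell \<eta> x"] by linarith
        then have "s x = Pi_part \<eta> f x" using Pi_part_eq[OF ip c] by (simp add: s_def val_def)
        then show False using x by simp
      qed
      then show "x \<in> (\<Union>J\<in>?I. J)" using c by blast
    qed
  qed
  have "Var (Pi_part \<eta> f) \<le> var01 s"
    unfolding Var_def by (rule INF_lower) (simp add: ae)
  also have "var01 s \<le> var01 g"
    unfolding var01_def[of s]
  proof (rule SUP_least)
    fix xs :: "real list" assume xs: "xs \<in> {xs. sorted xs \<and> set xs \<subseteq> {0..1}}"
    show "ereal (\<Sum>i < length xs - 1. \<bar>s (xs ! Suc i) - s (xs ! i)\<bar>) \<le> var01 g"
    proof (cases "xs = []")
      case True then show ?thesis using var01_nonneg[of g] by (simp add: zero_ereal_def)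
    next
      case False
      have st: "sorted xs" "set xs \<subseteq> \<Union>\<eta>" using xs ip_union[OF ip] by auto
      obtain w where w: "sorted w" "set w \<subseteq> \<Union>\<eta>"
        "\<bar>g (lo (cell \<eta> (hd xs))) - val (cell \<eta> (hd xs))\<bar> + vs (\<lambda>x. val (cell \<eta> x)) xs \<le> vs g w"
        using step_var[of \<eta> "cell \<eta>" lo hi g val, OF ip_disj[OF ip] ip_ivl[OF ip] _ lohi st False]
          cell[OF ip] ip_union[OF ip] by blast
      have "vs s xs \<le> vs g w" using w(3) by (simp add: s_def)
      moreover have "ereal (vs g w) \<le> var01 g" using w ip_union[OF ip] by (intro vs_le_var01) auto
      ultimately show ?thesis unfolding vs_def[symmetric] by (meson ereal_less_eq(3) order_trans)
    qed
  qed
  finally show "Var (Pi_part \<eta> f) \<le> var01 g" .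
qed

end

context
  fixes \<eta> :: "real set set"
  assumes ip: "interval_partition \<eta>"
begin

lemma Pi_alt: "Pi_part \<eta> f = (\<lambda>x. \<Sum>J\<in>\<eta>. indicator J x * ((LINT y:J|lam. f y) / measure lam J))"
  unfolding Pi_part_def by (intro ext sum.cong) (auto simp: indicator_def)

lemma Pi_int: "integrable lam (Pi_part \<eta> f)"
  unfolding Pi_alt
proof (rule Bochner_Integration.integrable_sum)
  fix J assume "J \<in> \<eta>"
  then show "integrable lam (\<lambda>x. indicator J x * ((LINT y:J|lam. f y) / measure lam J))"
    by (intro integrable_ind_mult ip_sets[OF ip]) auto
qed

lemma sum_ind: assumes "x \<in> {0..1}" shows "(\<Sum>J\<in>\<eta>. indicator J x) = (1::real)"
proof -
  have cx: "cell \<eta> x \<in> \<eta>" "x \<in> cell \<eta> x" using cell[OF ip assms] by auto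
  have "(\<Sum>J\<in>\<eta>. indicator J x) = (\<Sum>J\<in>\<eta>. if J = cell \<eta> x then 1 else (0::real))"
  proof (rule sum.cong[OF refl])
    fix J assume J: "J \<in> \<eta>"
    show "indicator J x = (if J = cell \<eta> x then 1 else (0::real))"
    proof (cases "x \<in> J")
      case True
      then have "cell \<eta> x = J" using cell_eq[OF ip J] by blast
      then show ?thesis using True by (simp add: indicator_def)
    next
      case False
      then have "J \<noteq> cell \<eta> x" using cx by blast
      then show ?thesis using False by (simp add: indicator_def)
    qed
  qed
  also have "\<dots> = 1" using cx(1) ip_finite[OF ip] by (simp add: sum.delta')
  finally show ?thesis .
qed

lemma Pi_norm:
  assumes int: "integrable lam f"
  shows "norm1 (Pi_part \<eta> f) \<le> norm1 f"
proof -
  define c where "c J = (LINT y:J|lam. f y) / measure lam J" for J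
  have fin: "finite \<eta>" using ip_finite[OF ip] .
  have S: "\<And>J. J \<in> \<eta> \<Longrightarrow> J \<in> sets lam" using ip_sets[OF ip] .
  have ii: "\<And>J. J \<in> \<eta> \<Longrightarrow> integrable lam (indicat_real J)"
    by (rule integrable_real_indicator[OF S]) (simp_all add: less_top[symmetric] lamF.emeasure_finite)
  have i1: "integrable lam (\<lambda>x. \<Sum>J\<in>\<eta>. indicator J x * \<bar>c J\<bar>)"
    by (intro Bochner_Integration.integrable_sum integrable_ind_mult S) auto
  have "norm1 (Pi_part \<eta> f) \<le> integral\<^sup>L lam (\<lambda>x. \<Sum>J\<in>\<eta>. indicator J x * \<bar>c J\<bar>)"
    unfolding norm1_def
  proof (rule integral_mono)
    show "integrable lam (\<lambda>x. \<bar>Pi_part \<eta> f x\<bar>)" using Pi_int by auto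
    show "integrable lam (\<lambda>x. \<Sum>J\<in>\<eta>. indicator J x * \<bar>c J\<bar>)" by (rule i1)
    fix x
    have "\<bar>Pi_part \<eta> f x\<bar> = \<bar>\<Sum>J\<in>\<eta>. indicator J x * c J\<bar>" by (simp add: Pi_alt c_def)
    also have "\<dots> \<le> (\<Sum>J\<in>\<eta>. \<bar>indicator J x * c J\<bar>)" by (rule sum_abs)
    also have "\<dots> = (\<Sum>J\<in>\<eta>. indicator J x * \<bar>c J\<bar>)" by (simp add: abs_mult)
    finally show "\<bar>Pi_part \<eta> f x\<bar> \<le> (\<Sum>J\<in>\<eta>. indicator J x * \<bar>c J\<bar>)" .
  qed
  also have "\<dots> = (\<Sum>J\<in>\<eta>. measure lam J * \<bar>c J\<bar>)"
    using ip_sub[OF ip] S ii by (subst Bochner_Integration.integral_sum) (auto intro!: integrable_ind_mult simp: Int_absorb2)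
  also have "\<dots> \<le> (\<Sum>J\<in>\<eta>. integral\<^sup>L lam (\<lambda>x. indicator J x * \<bar>f x\<bar>))"
  proof (rule sum_mono)
    fix J assume J: "J \<in> \<eta>"
    have nn: "0 \<le> integral\<^sup>L lam (\<lambda>x. indicator J x * \<bar>f x\<bar>)" by (rule integral_nonneg_AE) auto
    show "measure lam J * \<bar>c J\<bar> \<le> integral\<^sup>L lam (\<lambda>x. indicator J x * \<bar>f x\<bar>)"
    proof (cases "measure lam J = 0")
      case True then show ?thesis using nn by simp
    next
      case False
      have "measure lam J * \<bar>c J\<bar> = \<bar>integral\<^sup>L lam (\<lambda>x. indicator J x * f x)\<bar>"
        using False measure_nonneg[of lam J]
        by (simp add: c_def abs_div set_lebesgue_integral_def)
      also have "\<dots> \<le> integral\<^sup>L lam (\<lambda>x. indicator J x * \<bar>f x\<bar>)"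
        by (rule integral_abs_bound_integral) (use int S[OF J] in \<open>auto simp: abs_mult\<close>)
      finally show ?thesis .
    qed
  qed
  also have "\<dots> = integral\<^sup>L lam (\<lambda>x. \<Sum>J\<in>\<eta>. indicator J x * \<bar>f x\<bar>)"
    using S int by (subst Bochner_Integration.integral_sum) auto
  also have "\<dots> = norm1 f"
    unfolding norm1_def
  proof (rule Bochner_Integration.integral_cong[OF refl])
    fix x assume x: "x \<in> space lam"
    have "(\<Sum>J\<in>\<eta>. indicator J x * \<bar>f x\<bar>) = (\<Sum>J\<in>\<eta>. indicator J x) * \<bar>f x\<bar>"
      by (simp add: sum_distrib_right)
    also have "\<dots> = \<bar>f x\<bar>" using sum_ind x by simp
    finally show "(\<Sum>J\<in>\<eta>. indicator J x * \<bar>f x\<bar>) = \<bar>f x\<bar>" .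
  qed
  finally show ?thesis .
qed

end

abbreviation vv :: "(real \<Rightarrow> real) \<Rightarrow> real" where "vv h \<equiv> real_of_ereal (Var h)"

lemma vv_le: "g \<in> BV \<Longrightarrow> Var g \<le> ereal r \<Longrightarrow> vv g \<le> r"
  using BV_Var_finite[of g] by (metis ereal_less_eq(3))

lemma vv_nonneg: "0 \<le> vv g"
  using Var_nonneg[of g] by (simp add: real_of_ereal_pos)

lemma BVI: "integrable lam g \<Longrightarrow> Var g \<le> ereal r \<Longrightarrow> g \<in> BV"
  unfolding BV_def by (auto intro: le_less_trans)

lemma iter_bound:
  fixes Q :: "(real\<Rightarrow>real) \<Rightarrow> (real\<Rightarrow>real)" and \<alpha> C :: real
  assumes Q_BV: "\<And>f. f \<in> BV \<Longrightarrow> Q f \<in> BV"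
    and QV: "\<And>f. f \<in> BV \<Longrightarrow> vv (Q f) \<le> \<alpha> * vv f + C * norm1 f"
    and QN: "\<And>f. f \<in> BV \<Longrightarrow> norm1 (Q f) \<le> norm1 f"
    and \<alpha>: "0 \<le> \<alpha>" "\<alpha> < 1" and C: "0 \<le> C"
    and f: "f \<in> BV"
  shows "normBV ((Q^^n) f) \<le> ereal (\<alpha>^n) * normBV f + ereal ((1 + C/(1-\<alpha>)) * norm1 f)"
proof -
  define S where "S n = (\<Sum>i<n. \<alpha>^i)" for n
  have ind: "(Q^^n) f \<in> BV \<and> norm1 ((Q^^n) f) \<le> norm1 f \<and>
      vv ((Q^^n) f) \<le> \<alpha>^n * vv f + C * S n * norm1 f" for n
  proof (induction n)
    case 0 then show ?case using f by (simp add: S_def)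
  next
    case (Suc n)
    let ?g = "(Q^^n) f"
    have g: "?g \<in> BV" "norm1 ?g \<le> norm1 f" "vv ?g \<le> \<alpha>^n * vv f + C * S n * norm1 f"
      using Suc by auto
    have SS: "S (Suc n) = 1 + \<alpha> * S n"
      unfolding S_def by (simp add: sum.lessThan_Suc_shift sum_distrib_left del: sum.lessThan_Suc)
    have "vv (Q ?g) \<le> \<alpha> * vv ?g + C * norm1 ?g" using QV[OF g(1)] .
    also have "\<dots> \<le> \<alpha> * (\<alpha>^n * vv f + C * S n * norm1 f) + C * norm1 f"
      using g(2,3) \<alpha> C by (intro add_mono mult_left_mono) auto
    also have "\<dots> = \<alpha>^Suc n * vv f + C * S (Suc n) * norm1 f"
      by (simp add: SS algebra_simps)
    finally show ?case using Q_BV[OF g(1)] QN[OF g(1)] g(2) by simp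
  qed
  have Sle: "S n \<le> 1 / (1 - \<alpha>)"
  proof -
    have "S n = (1 - \<alpha>^n) / (1 - \<alpha>)" unfolding S_def using \<alpha> by (simp add: sum_gp_strict)
    also have "\<dots> \<le> 1 / (1 - \<alpha>)" using \<alpha> by (intro divide_right_mono) auto
    finally show ?thesis .
  qed
  let ?g = "(Q^^n) f"
  have g: "?g \<in> BV" "norm1 ?g \<le> norm1 f" "vv ?g \<le> \<alpha>^n * vv f + C * S n * norm1 f"
    using ind by auto
  have N0: "0 \<le> norm1 f" by (rule norm1_nonneg)
  have "C * S n * norm1 f \<le> C * (1 / (1 - \<alpha>)) * norm1 f"
    using Sle C N0 by (intro mult_right_mono mult_left_mono) auto
  then have key: "vv ?g + norm1 ?g \<le> \<alpha>^n * (vv f + norm1 f) + (1 + C/(1-\<alpha>)) * norm1 f"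
  proof -
    assume h: "C * S n * norm1 f \<le> C * (1 / (1 - \<alpha>)) * norm1 f"
    have p: "0 \<le> \<alpha>^n * norm1 f" using N0 \<alpha> by simp
    have q1: "\<alpha>^n * (vv f + norm1 f) = \<alpha>^n * vv f + \<alpha>^n * norm1 f" by (simp add: algebra_simps)
    have q2: "(1 + C/(1-\<alpha>)) * norm1 f = norm1 f + C * (1 / (1 - \<alpha>)) * norm1 f" by (simp add: algebra_simps)
    show ?thesis using g(2,3) h p q1 q2 by linarith
  qed
  have e1: "normBV ?g = ereal (vv ?g + norm1 ?g)"
    unfolding normBV_def using BV_Var_finite[OF g(1)] by (metis plus_ereal.simps(1))
  have e2: "normBV f = ereal (vv f + norm1 f)"
    unfolding normBV_def using BV_Var_finite[OF f] by (metis plus_ereal.simps(1))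
  show ?thesis unfolding e1 e2 using key by simp
qed


theorem lemma4p1:
  fixes T :: "real \<Rightarrow> real"
    and P :: "(real \<Rightarrow> real) \<Rightarrow> (real \<Rightarrow> real)"
    and \<alpha>0 B0 :: real
  assumes meas: "T \<in> lam \<rightarrow>\<^sub>M lam"
    and nonsing: "nonsingular T"
    and PF: "is_PF_operator T P"
    and \<alpha>0: "0 < \<alpha>0" "\<alpha>0 < 1"
    and B0: "0 \<le> B0"
    and LY: "\<And>f. f \<in> BV \<Longrightarrow> Var (P f) \<le> ereal \<alpha>0 * Var f + ereal (B0 * norm1 f)"
  shows "(\<forall>n f. f \<in> BV \<longrightarrow>
            normBV ((P ^^ n) f) \<le> ereal (\<alpha>0 ^ n) * normBV f + ereal ((1 + B0 / (1 - \<alpha>0)) * norm1 f))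
       \<and> (\<forall>\<eta> n f. interval_partition \<eta> \<longrightarrow> f \<in> BV \<longrightarrow>
            normBV ((ulam_op \<eta> P ^^ n) f) \<le> ereal (\<alpha>0 ^ n) * normBV f + ereal ((1 + B0 / (1 - \<alpha>0)) * norm1 f))
       \<and> (\<alpha>0 < 1/3 \<longrightarrow>
          (\<forall>a b n f. 0 \<le> a \<longrightarrow> a < b \<longrightarrow> b \<le> 1 \<longrightarrow> f \<in> BV \<longrightarrow>
            normBV ((hole_op {a<..<b} P ^^ n) f)
              \<le> ereal ((3 * \<alpha>0) ^ n) * normBV f
                 + ereal ((1 + (2 * \<alpha>0 + B0) / (1 - 3 * \<alpha>0)) * norm1 f)))"
proof -
  have Pstep: "P g \<in> BV \<and> vv (P g) \<le> \<alpha>0 * vv g + B0 * norm1 g \<and> norm1 (P g) \<le> norm1 g"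
    if g: "g \<in> BV" for g
  proof -
    have ig: "integrable lam g" using g by (simp add: BV_def)
    have V: "Var (P g) \<le> ereal (\<alpha>0 * vv g + B0 * norm1 g)"
      using LY[OF g] BV_Var_finite[OF g] by (metis plus_ereal.simps(1) times_ereal.simps(1))
    have PB: "P g \<in> BV" by (rule BVI[OF PF_norm(1)[OF meas PF ig] V])
    show ?thesis using PB vv_le[OF PB V] PF_norm(2)[OF meas PF ig] by simp
  qed
  have part1: "\<forall>n f. f \<in> BV \<longrightarrow>
      normBV ((P ^^ n) f) \<le> ereal (\<alpha>0 ^ n) * normBV f + ereal ((1 + B0 / (1 - \<alpha>0)) * norm1 f)"
    using Pstep \<alpha>0 B0 by (intro allI impI iter_bound) auto
  have part2: "\<forall>\<eta> n f. interval_partition \<eta> \<longrightarrow> f \<in> BV \<longrightarrow>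
      normBV ((ulam_op \<eta> P ^^ n) f) \<le> ereal (\<alpha>0 ^ n) * normBV f + ereal ((1 + B0 / (1 - \<alpha>0)) * norm1 f)"
  proof (intro allI impI)
    fix \<eta> n f assume ip: "interval_partition \<eta>" and f: "f \<in> BV"
    have Pistep: "Pi_part \<eta> g \<in> BV \<and> vv (Pi_part \<eta> g) \<le> vv g \<and> norm1 (Pi_part \<eta> g) \<le> norm1 g"
      if g: "g \<in> BV" for g
    proof -
      have ig: "integrable lam g" using g by (simp add: BV_def)
      have V: "Var (Pi_part \<eta> g) \<le> ereal (vv g)"
        using Var_Pi[OF ip ig] BV_Var_finite[OF g] by simp
      have PB: "Pi_part \<eta> g \<in> BV" by (rule BVI[OF Pi_int[OF ip] V])
      show ?thesis using PB vv_le[OF PB V] Pi_norm[OF ip ig] by simp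
    qed
    have Ustep: "ulam_op \<eta> P g \<in> BV \<and> vv (ulam_op \<eta> P g) \<le> \<alpha>0 * vv g + B0 * norm1 g
        \<and> norm1 (ulam_op \<eta> P g) \<le> norm1 g" if g: "g \<in> BV" for g
    proof -
      have u: "ulam_op \<eta> P g = Pi_part \<eta> (P (Pi_part \<eta> g))" by (simp add: ulam_op_def)
      obtain a1: "Pi_part \<eta> g \<in> BV" "vv (Pi_part \<eta> g) \<le> vv g" "norm1 (Pi_part \<eta> g) \<le> norm1 g"
        using Pistep[OF g] by blast
      obtain a2: "P (Pi_part \<eta> g) \<in> BV" "vv (P (Pi_part \<eta> g)) \<le> \<alpha>0 * vv (Pi_part \<eta> g) + B0 * norm1 (Pi_part \<eta> g)"
          "norm1 (P (Pi_part \<eta> g)) \<le> norm1 (Pi_part \<eta> g)"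
        using Pstep[OF a1(1)] by blast
      obtain a3: "Pi_part \<eta> (P (Pi_part \<eta> g)) \<in> BV" "vv (Pi_part \<eta> (P (Pi_part \<eta> g))) \<le> vv (P (Pi_part \<eta> g))"
          "norm1 (Pi_part \<eta> (P (Pi_part \<eta> g))) \<le> norm1 (P (Pi_part \<eta> g))"
        using Pistep[OF a2(1)] by blast
      have "\<alpha>0 * vv (Pi_part \<eta> g) \<le> \<alpha>0 * vv g" using a1(2) \<alpha>0 by simp
      moreover have "B0 * norm1 (Pi_part \<eta> g) \<le> B0 * norm1 g" using a1(3) B0 by (simp add: mult_left_mono)
      ultimately show ?thesis unfolding u using a1 a2 a3 by linarith
    qed
    show "normBV ((ulam_op \<eta> P ^^ n) f) \<le> ereal (\<alpha>0 ^ n) * normBV f + ereal ((1 + B0 / (1 - \<alpha>0)) * norm1 f)"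
      using Ustep \<alpha>0 B0 f by (intro iter_bound) auto
  qed
  have part3: "\<alpha>0 < 1/3 \<longrightarrow>
          (\<forall>a b n f. 0 \<le> a \<longrightarrow> a < b \<longrightarrow> b \<le> 1 \<longrightarrow> f \<in> BV \<longrightarrow>
            normBV ((hole_op {a<..<b} P ^^ n) f)
              \<le> ereal ((3 * \<alpha>0) ^ n) * normBV f
                 + ereal ((1 + (2 * \<alpha>0 + B0) / (1 - 3 * \<alpha>0)) * norm1 f))"
  proof (intro impI allI)
    fix a b :: real and n f assume small: "\<alpha>0 < 1/3" and f: "f \<in> BV"
    have Hstep: "hole_op {a<..<b} P g \<in> BV \<and> vv (hole_op {a<..<b} P g) \<le> (3 * \<alpha>0) * vv g + (2 * \<alpha>0 + B0) * norm1 g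
        \<and> norm1 (hole_op {a<..<b} P g) \<le> norm1 g" if g: "g \<in> BV" for g
    proof -
      define h where "h = (\<lambda>x. g x * indicator ({0..1} - {a<..<b}) x)"
      have u: "hole_op {a<..<b} P g = P h" by (simp add: hole_op_def h_def)
      have hi: "integrable lam h" "norm1 h \<le> norm1 g" "Var h \<le> ereal (3 * vv g + 2 * norm1 g)"
        using hole_BV[OF g, of a b] unfolding h_def by auto
      have hB: "h \<in> BV" by (rule BVI[OF hi(1) hi(3)])
      have hv: "vv h \<le> 3 * vv g + 2 * norm1 g" by (rule vv_le[OF hB hi(3)])
      obtain a2: "P h \<in> BV" "vv (P h) \<le> \<alpha>0 * vv h + B0 * norm1 h" "norm1 (P h) \<le> norm1 h"
        using Pstep[OF hB] by blast
      have "\<alpha>0 * vv h \<le> \<alpha>0 * (3 * vv g + 2 * norm1 g)" using hv \<alpha>0 by simp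
      moreover have "B0 * norm1 h \<le> B0 * norm1 g" using hi(2) B0 by (simp add: mult_left_mono)
      ultimately show ?thesis unfolding u using a2 hi(2) by (simp add: algebra_simps)
    qed
    show "normBV ((hole_op {a<..<b} P ^^ n) f)
              \<le> ereal ((3 * \<alpha>0) ^ n) * normBV f
                 + ereal ((1 + (2 * \<alpha>0 + B0) / (1 - 3 * \<alpha>0)) * norm1 f)"
      using Hstep \<alpha>0 B0 f small by (intro iter_bound) auto
  qed
  show ?thesis using part1 part2 part3 by blast
qed


end
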